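(* Let $d\ge1$ and let $X_1,\dots,X_d$ be non-negative integrable random variables that are pairwise independent. Let $\tilde X_1,\dots,\tilde X_d$ be mutually independent with $\tilde X_i$ equal in distribution to $X_i$. Then $\mathbb{E}\max_{i\in[d]}X_i\ge\frac12\mathbb{E}\max_{i\in[d]}\tilde X_i$.
   Context: $[d]=\{1,\dots,d\}$. *)

theory Defs
  imports "HOL-Probability.Probability"
begin

end

theory Submission
  imports Defs
begin

lemma layer_cake:
  fixes f :: "'a \<Rightarrow> real"
  assumes M: "sigma_finite_measure M" and f: "f \<in> borel_measurable M"
  shows "(\<integral>\<^sup>+x. ennreal (f x) \<partial>M) =
    (\<integral>\<^sup>+t. emeasure M {x\<in>space M. t < f x} * indicator {0..} t \<partial>lborel)"
proof -
  interpret pair_sigma_finite M lborel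
    using M by (intro pair_sigma_finite.intro) (auto intro: lborel.sigma_finite_measure_axioms)
  have 1: "ennreal (f x) = (\<integral>\<^sup>+t. indicator {0..<f x} t \<partial>lborel)" for x
    by (cases "0 \<le> f x") (auto simp: ennreal_neg)
  have 2: "(\<integral>\<^sup>+x. indicator {0..<f x} t \<partial>M) = emeasure M {x\<in>space M. t < f x} * indicator {0..} t" for t
  proof -
    have "(\<integral>\<^sup>+x. indicator {0..<f x} t \<partial>M) = (\<integral>\<^sup>+x. indicator {x\<in>space M. t < f x} x * indicator {0..} t \<partial>M)"
      by (intro nn_integral_cong) (auto simp: indicator_def)
    also have "\<dots> = emeasure M {x\<in>space M. t < f x} * indicator {0..} t"
      using f by (subst nn_integral_multc) auto
    finally show ?thesis .
  qed
  have meas: "(\<lambda>(x,t). indicator {0..<f x} t :: ennreal) \<in> borel_measurable (M \<Otimes>\<^sub>M lborel)"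
  proof -
    have "(\<lambda>(x,t). indicator {0..<f x} t :: ennreal) = (\<lambda>p. if 0 \<le> snd p \<and> snd p < f (fst p) then 1 else 0)"
      by (auto simp: indicator_def fun_eq_iff)
    also have "\<dots> \<in> borel_measurable (M \<Otimes>\<^sub>M lborel)"
      using f by measurable
    finally show ?thesis .
  qed
  show ?thesis
    unfolding 1 using Fubini'[OF meas] 2 by simp
qed


lemma layer_cake_meas:
  fixes f :: "'a \<Rightarrow> real"
  assumes M: "sigma_finite_measure M" and f: "f \<in> borel_measurable M"
  shows "(\<lambda>t. emeasure M {x\<in>space M. t < f x} * indicator {0..} t) \<in> borel_measurable lborel"
proof -
  interpret pair_sigma_finite M lborel
    using M by (intro pair_sigma_finite.intro) (auto intro: lborel.sigma_finite_measure_axioms)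
  have 1: "ennreal (f x) = (\<integral>\<^sup>+t. indicator {0..<f x} t \<partial>lborel)" for x
    by (cases "0 \<le> f x") (auto simp: ennreal_neg)
  have 2: "(\<integral>\<^sup>+x. indicator {0..<f x} t \<partial>M) = emeasure M {x\<in>space M. t < f x} * indicator {0..} t" for t
  proof -
    have "(\<integral>\<^sup>+x. indicator {0..<f x} t \<partial>M) = (\<integral>\<^sup>+x. indicator {x\<in>space M. t < f x} x * indicator {0..} t \<partial>M)"
      by (intro nn_integral_cong) (auto simp: indicator_def)
    also have "\<dots> = emeasure M {x\<in>space M. t < f x} * indicator {0..} t"
      using f by (subst nn_integral_multc) auto
    finally show ?thesis .
  qed
  have meas: "(\<lambda>(x,t). indicator {0..<f x} t :: ennreal) \<in> borel_measurable (M \<Otimes>\<^sub>M lborel)"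
  proof -
    have "(\<lambda>(x,t). indicator {0..<f x} t :: ennreal) = (\<lambda>p. if 0 \<le> snd p \<and> snd p < f (fst p) then 1 else 0)"
      by (auto simp: indicator_def fun_eq_iff)
    also have "\<dots> \<in> borel_measurable (M \<Otimes>\<^sub>M lborel)"
      using f by measurable
    finally show ?thesis .
  qed
  have "(\<lambda>t. \<integral>\<^sup>+x. indicator {0..<f x} t \<partial>M) \<in> borel_measurable lborel"
    using meas by (intro M1.borel_measurable_nn_integral) (simp add: measurable_pair_swap_iff[symmetric] split_beta)
  then show ?thesis unfolding 2 .
qed


lemma union_lower:
  assumes P: "prob_space M" and I: "finite I" and A: "\<And>i. i \<in> I \<Longrightarrow> A i \<in> sets M"
    and pw: "\<And>i j. i \<in> I \<Longrightarrow> j \<in> I \<Longrightarrow> i \<noteq> j \<Longrightarrow>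
               measure M (A i \<inter> A j) \<le> measure M (A i) * measure M (A j)"
  shows "(\<Sum>i\<in>I. measure M (A i)) / (1 + (\<Sum>i\<in>I. measure M (A i))) \<le> measure M (\<Union>i\<in>I. A i)"
proof -
  interpret prob_space M by fact
  define S where "S = (\<Sum>i\<in>I. measure M (A i))"
  define c where "c = 1 / (1 + S)"
  define Z where "Z x = (\<Sum>i\<in>I. indicator (A i) x :: real)" for x
  have S0: "S \<ge> 0" unfolding S_def by (simp add: sum_nonneg)
  have c0: "c > 0" unfolding c_def using S0 by simp
  have intA: "integrable M (indicator (A i) :: _ \<Rightarrow> real)" if "i \<in> I" for i
    using A[OF that] by (intro integrable_real_indicator) (auto simp: less_top[symmetric])
  have intAA: "integrable M (\<lambda>x. indicator (A i) x * indicator (A j) x :: real)" if "i \<in> I" "j \<in> I" for i j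
    using A[OF that(1)] A[OF that(2)] by (simp only: indicator_inter_arith[symmetric]) (intro integrable_real_indicator, auto simp: less_top[symmetric])
  have intZ: "integrable M Z" unfolding Z_def using intA by auto
  have Z2: "(\<lambda>x. (Z x)^2) = (\<lambda>x. \<Sum>i\<in>I. \<Sum>j\<in>I. indicator (A i) x * indicator (A j) x)"
    unfolding Z_def by (simp add: power2_eq_square sum_product)
  have intZ2: "integrable M (\<lambda>x. (Z x)^2)" unfolding Z2 using intAA by auto
  have EZ: "(\<integral>x. Z x \<partial>M) = S"
    unfolding Z_def S_def
  proof -
    have "(\<integral>x. (\<Sum>i\<in>I. indicator (A i) x :: real) \<partial>M) = (\<Sum>i\<in>I. \<integral>x. indicator (A i) x \<partial>M)"
      using intA by simp
    also have "\<dots> = (\<Sum>i\<in>I. measure M (A i))"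
      using A by (intro sum.cong) auto
    finally show "(\<integral>x. (\<Sum>i\<in>I. indicator (A i) x :: real) \<partial>M) = (\<Sum>i\<in>I. measure M (A i))" .
  qed
  have "(\<integral>x. (Z x)^2 \<partial>M) = (\<Sum>i\<in>I. \<Sum>j\<in>I. measure M (A i \<inter> A j))"
  proof -
    have "(\<integral>x. (Z x)^2 \<partial>M) = (\<Sum>i\<in>I. \<integral>x. (\<Sum>j\<in>I. indicator (A i) x * indicator (A j) x :: real) \<partial>M)"
      unfolding Z2 using intAA by simp
    also have "\<dots> = (\<Sum>i\<in>I. \<Sum>j\<in>I. \<integral>x. (indicator (A i) x * indicator (A j) x :: real) \<partial>M)"
      using intAA by simp
    also have "\<dots> = (\<Sum>i\<in>I. \<Sum>j\<in>I. measure M (A i \<inter> A j))"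
      using A by (intro sum.cong refl) (auto simp: indicator_inter_arith[symmetric])
    finally show ?thesis .
  qed
  also have "\<dots> \<le> (\<Sum>i\<in>I. \<Sum>j\<in>I. (if i = j then measure M (A i) else 0) + measure M (A i) * measure M (A j))"
  proof (intro sum_mono)
    fix i j assume ij: "i \<in> I" "j \<in> I"
    show "measure M (A i \<inter> A j) \<le> (if i = j then measure M (A i) else 0) + measure M (A i) * measure M (A j)"
      using pw[OF ij] by (cases "i = j") auto
  qed
  also have "\<dots> = S + S^2"
    unfolding S_def by (simp add: sum.distrib I power2_eq_square sum_product)
  finally have EZ2: "(\<integral>x. (Z x)^2 \<partial>M) \<le> S + S^2" .
  have pt: "2 * c * Z x - c^2 * (Z x)^2 \<le> indicator (\<Union>i\<in>I. A i) x" for x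
  proof (cases "x \<in> (\<Union>i\<in>I. A i)")
    case True
    have "2 * c * Z x - c^2 * (Z x)^2 = 1 - (1 - c * Z x)^2" by (simp add: power2_eq_square algebra_simps)
    also have "\<dots> \<le> 1" by simp
    finally show ?thesis using True by simp
  next
    case False
    then have "Z x = 0" unfolding Z_def by (auto intro!: sum.neutral)
    then show ?thesis using False by simp
  qed
  have "2 * c * S - c^2 * (S + S^2) \<le> 2 * c * S - c^2 * (\<integral>x. (Z x)^2 \<partial>M)"
    using EZ2 c0 by (intro diff_left_mono mult_left_mono) auto
  also have "\<dots> = (\<integral>x. 2 * c * Z x - c^2 * (Z x)^2 \<partial>M)"
    using intZ intZ2 EZ by simp
  also have "\<dots> \<le> (\<integral>x. indicator (\<Union>i\<in>I. A i) x \<partial>M)"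
    using pt intZ intZ2 A I by (intro integral_mono) (auto intro!: integrable_real_indicator simp: less_top[symmetric])
  also have "\<dots> = measure M (\<Union>i\<in>I. A i)"
    using sets.finite_UN[OF I A] by (simp add: Int_absorb2 sets.sets_into_space)
  finally have "2 * c * S - c^2 * (S + S^2) \<le> measure M (\<Union>i\<in>I. A i)" .
  moreover have "2 * c * S - c^2 * (S + S^2) = S / (1 + S)"
    proof -
    have "1 + S \<noteq> 0" using S0 by simp
    then show ?thesis unfolding c_def by (simp add: divide_simps power2_eq_square) (simp add: algebra_simps)
  qed
  ultimately show ?thesis unfolding S_def by simp
qed


theorem proposition12:
  fixes M :: "'a measure" and N :: "'b measure"
    and X :: "nat \<Rightarrow> 'a \<Rightarrow> real" and Xt :: "nat \<Rightarrow> 'b \<Rightarrow> real"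
    and d :: nat
  assumes "prob_space M" and "prob_space N"
    and "d \<ge> 1"
    and integrable: "\<And>i. i \<in> {1..d} \<Longrightarrow> integrable M (X i)"
    and nonneg: "\<And>i x. i \<in> {1..d} \<Longrightarrow> x \<in> space M \<Longrightarrow> X i x \<ge> 0"
    and pairwise_indep: "\<And>i j. i \<in> {1..d} \<Longrightarrow> j \<in> {1..d} \<Longrightarrow> i \<noteq> j \<Longrightarrow>
           prob_space.indep_var M borel (X i) borel (X j)"
    and Xt_rv: "\<And>i. i \<in> {1..d} \<Longrightarrow> Xt i \<in> borel_measurable N"
    and Xt_indep: "prob_space.indep_vars N (\<lambda>_. borel) Xt {1..d}"
    and same_distr: "\<And>i. i \<in> {1..d} \<Longrightarrow> distr N borel (Xt i) = distr M borel (X i)"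
  shows "(\<integral>x. Max ((\<lambda>i. X i x) ` {1..d}) \<partial>M)
           \<ge> 1/2 * (\<integral>y. Max ((\<lambda>i. Xt i y) ` {1..d}) \<partial>N)"
proof -
  interpret M: prob_space M by fact
  interpret N: prob_space N by fact
  define D where "D = {1..d}"
  define G where "G x = Max ((\<lambda>i. X i x) ` D)" for x
  define F where "F y = Max ((\<lambda>i. Xt i y) ` D)" for y
  have Dfin: "finite D" and Dne: "D \<noteq> {}" unfolding D_def using \<open>d \<ge> 1\<close> by auto
  have Xm: "X i \<in> borel_measurable M" if "i \<in> D" for i
    using integrable[of i] that unfolding D_def by auto
  have Xtm: "Xt i \<in> borel_measurable N" if "i \<in> D" for i
    using Xt_rv[of i] that unfolding D_def by auto
  have Gm: "G \<in> borel_measurable M" unfolding G_def using Dfin Xm by (rule borel_measurable_Max)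
  have Fm: "F \<in> borel_measurable N" unfolding F_def using Dfin Xtm by (rule borel_measurable_Max)
  have Gset: "{x\<in>space M. t < G x} = (\<Union>i\<in>D. {x\<in>space M. t < X i x})" for t
    unfolding G_def using Dfin Dne by (auto simp: Max_gr_iff)
  have Fset: "{y\<in>space N. t < F y} = (\<Union>i\<in>D. {y\<in>space N. t < Xt i y})" for t
    unfolding F_def using Dfin Dne by (auto simp: Max_gr_iff)
  have sd: "measure N {y\<in>space N. t < Xt i y} = measure M {x\<in>space M. t < X i x}" if i: "i \<in> D" for i t
  proof -
    have "measure N {y\<in>space N. t < Xt i y} = measure (distr N borel (Xt i)) {t<..}"
      using Xtm[OF i] by (subst measure_distr) (auto intro!: arg_cong[where f="measure N"])
    also have "\<dots> = measure (distr M borel (X i)) {t<..}"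
      using same_distr i unfolding D_def by simp
    also have "\<dots> = measure M {x\<in>space M. t < X i x}"
      using Xm[OF i] by (subst measure_distr) (auto intro!: arg_cong[where f="measure M"])
    finally show ?thesis .
  qed
  have key: "1/2 * measure N {y\<in>space N. t < F y} \<le> measure M {x\<in>space M. t < G x}" for t
  proof -
    define S where "S = (\<Sum>i\<in>D. measure M {x\<in>space M. t < X i x})"
    have S0: "S \<ge> 0" unfolding S_def by (simp add: sum_nonneg)
    have "measure N {y\<in>space N. t < F y} \<le> (\<Sum>i\<in>D. measure N {y\<in>space N. t < Xt i y})"
      unfolding Fset using Dfin Xtm by (intro N.finite_measure_subadditive_finite) auto
    also have "\<dots> = S" unfolding S_def using sd by (intro sum.cong) auto
    finally have mS: "measure N {y\<in>space N. t < F y} \<le> S" .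
    have m1: "measure N {y\<in>space N. t < F y} \<le> 1" by simp
    have "S / (1 + S) \<le> measure M {x\<in>space M. t < G x}"
      unfolding Gset S_def
    proof (rule union_lower[OF \<open>prob_space M\<close> Dfin])
      fix i assume "i \<in> D" then show "{x\<in>space M. t < X i x} \<in> sets M" using Xm by measurable
    next
      fix i j assume ij: "i \<in> D" "j \<in> D" "i \<noteq> j"
      have "measure M ({x\<in>space M. t < X i x} \<inter> {x\<in>space M. t < X j x})
          = measure M ((\<lambda>x. (X i x, X j x)) -` ({t<..} \<times> {t<..}) \<inter> space M)"
        by (auto intro!: arg_cong[where f="measure M"])
      also have "\<dots> = measure M (X i -` {t<..} \<inter> space M) * measure M (X j -` {t<..} \<inter> space M)"
        using pairwise_indep[of i j] ij unfolding D_def by (intro M.indep_varD) auto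
      also have "\<dots> = measure M {x\<in>space M. t < X i x} * measure M {x\<in>space M. t < X j x}"
        by (auto intro!: arg_cong2[where f="(*)"] arg_cong[where f="measure M"])
      finally show "measure M ({x\<in>space M. t < X i x} \<inter> {x\<in>space M. t < X j x})
          \<le> measure M {x\<in>space M. t < X i x} * measure M {x\<in>space M. t < X j x}" by simp
    qed
    moreover have "1/2 * measure N {y\<in>space N. t < F y} \<le> S / (1 + S)"
    proof -
      let ?m = "measure N {y\<in>space N. t < F y}"
      have "?m * S \<le> 1 * S" using m1 S0 by (intro mult_right_mono) auto
      then have "?m * (1 + S) \<le> 2 * S" using mS by (simp add: algebra_simps)
      then show ?thesis using S0 by (simp add: divide_simps)
    qed
    ultimately show ?thesis by linarith
  qed
  have keye: "emeasure M {x\<in>space M. t < G x} * indicator {0..} t \<ge>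
      ennreal (1/2) * (emeasure N {y\<in>space N. t < F y} * indicator {0..} t)" for t
  proof (cases "t \<ge> 0")
    case True
    have "ennreal (1/2) * emeasure N {y\<in>space N. t < F y} = ennreal (1/2 * measure N {y\<in>space N. t < F y})"
      unfolding N.emeasure_eq_measure by (rule ennreal_mult[symmetric]) auto
    also have "\<dots> \<le> ennreal (measure M {x\<in>space M. t < G x})"
      using key by (rule ennreal_leI)
    also have "\<dots> = emeasure M {x\<in>space M. t < G x}" by (simp add: M.emeasure_eq_measure)
    finally show ?thesis using True by simp
  qed simp
  have "ennreal (1/2) * (\<integral>\<^sup>+y. ennreal (F y) \<partial>N) \<le> (\<integral>\<^sup>+x. ennreal (G x) \<partial>M)"
  proof -
    have "ennreal (1/2) * (\<integral>\<^sup>+y. ennreal (F y) \<partial>N)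
        = ennreal (1/2) * (\<integral>\<^sup>+t. emeasure N {y\<in>space N. t < F y} * indicator {0..} t \<partial>lborel)"
      using layer_cake[OF N.sigma_finite_measure_axioms Fm] by simp
    also have "\<dots> = (\<integral>\<^sup>+t. ennreal (1/2) * (emeasure N {y\<in>space N. t < F y} * indicator {0..} t) \<partial>lborel)"
      by (rule nn_integral_cmult[symmetric]) (rule layer_cake_meas[OF N.sigma_finite_measure_axioms Fm])
    also have "\<dots> \<le> (\<integral>\<^sup>+t. emeasure M {x\<in>space M. t < G x} * indicator {0..} t \<partial>lborel)"
      by (intro nn_integral_mono keye)
    also have "\<dots> = (\<integral>\<^sup>+x. ennreal (G x) \<partial>M)"
      using layer_cake[OF M.sigma_finite_measure_axioms Gm] by simp
    finally show ?thesis .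
  qed
  moreover have Gint: "integrable M G"
  proof (rule Bochner_Integration.integrable_bound)
    show "integrable M (\<lambda>x. \<Sum>i\<in>D. X i x)" using integrable unfolding D_def by auto
    show "G \<in> borel_measurable M" by (fact Gm)
    show "AE x in M. norm (G x) \<le> norm (\<Sum>i\<in>D. X i x)"
    proof (rule AE_I2)
      fix x assume x: "x \<in> space M"
      have nn: "\<And>i. i \<in> D \<Longrightarrow> 0 \<le> X i x" using nonneg x unfolding D_def by auto
      obtain i where i: "i \<in> D" "G x = X i x"
        proof -
        have "Max ((\<lambda>i. X i x) ` D) \<in> (\<lambda>i. X i x) ` D" using Dfin Dne by (intro Max_in) auto
        then show ?thesis using that unfolding G_def by blast
      qed
      have "X i x \<le> (\<Sum>i\<in>D. X i x)" using i(1) Dfin nn by (intro member_le_sum) auto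
      moreover have "0 \<le> (\<Sum>i\<in>D. X i x)" using nn by (simp add: sum_nonneg)
      ultimately show "norm (G x) \<le> norm (\<Sum>i\<in>D. X i x)" using i nn by simp
    qed
  qed
  have Gnn: "AE x in M. 0 \<le> G x"
  proof (rule AE_I2)
    fix x assume x: "x \<in> space M"
    obtain i where i: "i \<in> D" "G x = X i x"
      proof -
        have "Max ((\<lambda>i. X i x) ` D) \<in> (\<lambda>i. X i x) ` D" using Dfin Dne by (intro Max_in) auto
        then show ?thesis using that unfolding G_def by blast
      qed
    then show "0 \<le> G x" using nonneg x unfolding D_def by auto
  qed
  have Fnn: "AE y in N. 0 \<le> F y"
  proof -
    have "AE y in N. \<forall>i\<in>D. 0 \<le> Xt i y"
    proof (rule AE_finite_allI[OF Dfin])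
      fix i assume i: "i \<in> D"
      have "AE x in M. 0 \<le> X i x" using nonneg i unfolding D_def by auto
      then have "AE x in distr M borel (X i). 0 \<le> x"
        using Xm[OF i] by (subst AE_distr_iff) auto
      moreover have "distr N borel (Xt i) = distr M borel (X i)"
        using same_distr i unfolding D_def by blast
      ultimately have "AE x in distr N borel (Xt i). 0 \<le> x"
        by (simp only:)
      then show "AE y in N. 0 \<le> Xt i y"
        using Xtm[OF i] by (subst (asm) AE_distr_iff) auto
    qed
    then show ?thesis
    proof (rule AE_mp[OF _ AE_I2], intro impI)
      fix y assume "\<forall>i\<in>D. 0 \<le> Xt i y"
      moreover obtain i where "i \<in> D" "F y = Xt i y"
        proof -
        have "Max ((\<lambda>i. Xt i y) ` D) \<in> (\<lambda>i. Xt i y) ` D" using Dfin Dne by (intro Max_in) auto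
        then show ?thesis using that unfolding F_def by blast
      qed
      ultimately show "0 \<le> F y" by auto
    qed
  qed
  have eG: "(\<integral>\<^sup>+x. ennreal (G x) \<partial>M) = ennreal (integral\<^sup>L M G)"
    using Gint Gnn by (rule nn_integral_eq_integral)
  have eF: "integral\<^sup>L N F = enn2real (\<integral>\<^sup>+y. ennreal (F y) \<partial>N)"
    using Fm Fnn by (rule integral_eq_nn_integral)
  ultimately have le: "ennreal (1/2) * (\<integral>\<^sup>+y. ennreal (F y) \<partial>N) \<le> ennreal (integral\<^sup>L M G)"
    by (simp add: eG[symmetric])
  have "1/2 * integral\<^sup>L N F = enn2real (ennreal (1/2) * (\<integral>\<^sup>+y. ennreal (F y) \<partial>N))"
    unfolding eF enn2real_mult by (subst enn2real_ennreal) auto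
  also have "\<dots> \<le> enn2real (ennreal (integral\<^sup>L M G))"
    using le by (rule enn2real_mono) simp
  also have "\<dots> = integral\<^sup>L M G" using Gnn by (simp add: integral_nonneg_AE)
  finally show ?thesis unfolding G_def F_def D_def .
qed

end
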